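(* Consider the sample version of the stable PC-like algorithm (SPC4LWF), in which each conditional independence query "$u\perp\!\!\!\perp v\mid S$" is answered by a fixed (possibly erroneous, e.g. estimated from data by statistical tests) deterministic rule depending only on $(u,v,S)$, with the answer symmetric in $u$ and $v$. Then the skeleton (the undirected graph $H$ obtained at the end of the skeleton recovery phase) is the same for every ordering $\mathrm{order}(V)$ of the variables.
   Context: Let $V$ be a finite set of variables. Skeleton recovery phase of SPC4LWF with an ordering $\mathrm{order}(V)$: let $H$ be the complete undirected graph on $V$. For $i=0,1,\dots,|V|-2$: first, for every vertex $x$, store $a_H(x)$ := the current set of vertices adjacent to $x$ in $H$; then, while possible, select (in an order determined by $\mathrm{order}(V)$) an ordered pair $(u,v)$ with $u\in a_H(v)$, $u,v$ still adjacent in $H$, and $|a_H(u)\setminus\{v\}|\ge i$; if there is $S\subseteq a_H(u)\setminus\{v\}$ with $|S|=i$ for which the query $u\perp\!\!\!\perp v\mid S$ is answered "independent", set $S_{uv}=S_{vu}=S$ and remove the edge $u-v$ from $H$. The stored sets $a_H$ are not updated within a level $i$; they are recomputed only at the start of the next level. *)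

theory Defs
  imports Main
begin

text \<open>Undirected graphs on a vertex set are represented by their edge sets,
  each edge being a two-element set.\<close>

definition complete_graph :: "'a set \<Rightarrow> 'a set set" where
  "complete_graph V = {{u, v} | u v. u \<in> V \<and> v \<in> V \<and> u \<noteq> v}"

definition adj :: "'a set set \<Rightarrow> 'a \<Rightarrow> 'a set" where
  "adj H x = {y. {x, y} \<in> H}"

definition spc_step ::
  "('a \<Rightarrow> 'a \<Rightarrow> 'a set \<Rightarrow> bool) \<Rightarrow> ('a \<Rightarrow> 'a set) \<Rightarrow> nat \<Rightarrow> 'a \<times> 'a \<Rightarrow> 'a set set \<Rightarrow> 'a set set" where
  "spc_step indep a i p H =
     (let u = fst p; v = snd p in
      if u \<in> a v \<and> {u, v} \<in> H \<and> i \<le> card (a u - {v}) \<and>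
         (\<exists>S. S \<subseteq> a u - {v} \<and> card S = i \<and> indep u v S)
      then H - {{u, v}} else H)"

definition spc_level ::
  "('a \<Rightarrow> 'a \<Rightarrow> 'a set \<Rightarrow> bool) \<Rightarrow> ('a \<times> 'a) list \<Rightarrow> nat \<Rightarrow> 'a set set \<Rightarrow> 'a set set" where
  "spc_level indep ps i H = fold (spc_step indep (adj H) i) ps H"

text \<open>Skeleton recovery phase: levels i = 0, ..., |V| - 2 starting from the complete graph.
  sel ord i is the sequence in which ordered pairs are selected at level i under ordering ord.\<close>
definition spc_skeleton ::
  "'a set \<Rightarrow> ('a \<Rightarrow> 'a \<Rightarrow> 'a set \<Rightarrow> bool) \<Rightarrow> ('a list \<Rightarrow> nat \<Rightarrow> ('a \<times> 'a) list) \<Rightarrow> 'a list \<Rightarrow> 'a set set" where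
  "spc_skeleton V indep sel ord =
     fold (\<lambda>i H. spc_level indep (sel ord i) i H)
          (filter (\<lambda>i. i + 2 \<le> card V) [0..<card V])
          (complete_graph V)"

definition is_ordering :: "'a set \<Rightarrow> 'a list \<Rightarrow> bool" where
  "is_ordering V ord \<longleftrightarrow> distinct ord \<and> set ord = V"

end

theory Submission
  imports Defs
begin

definition cnd :: "('a \<Rightarrow> 'a \<Rightarrow> 'a set \<Rightarrow> bool) \<Rightarrow> ('a \<Rightarrow> 'a set) \<Rightarrow> nat \<Rightarrow> 'a \<times> 'a \<Rightarrow> bool" where
  "cnd indep a i p = (fst p \<in> a (snd p) \<and> i \<le> card (a (fst p) - {snd p}) \<and>
         (\<exists>S. S \<subseteq> a (fst p) - {snd p} \<and> card S = i \<and> indep (fst p) (snd p) S))"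

lemma step_eq: "spc_step indep a i p H = H - {{fst p, snd p} | q. q = p \<and> cnd indep a i p}"
  unfolding spc_step_def cnd_def Let_def by auto

lemma fold_eq: "fold (spc_step indep a i) ps H = H - {{fst p, snd p} | p. p \<in> set ps \<and> cnd indep a i p}"
proof (induction ps arbitrary: H)
  case Nil then show ?case by simp
next
  case (Cons p ps)
  have "fold (spc_step indep a i) (p # ps) H = fold (spc_step indep a i) ps (spc_step indep a i p H)"
    by simp
  also have "\<dots> = spc_step indep a i p H - {{fst p, snd p} | p. p \<in> set ps \<and> cnd indep a i p}"
    by (rule Cons)
  also have "\<dots> = H - {{fst q, snd q} | q. q \<in> set (p # ps) \<and> cnd indep a i q}"
  proof -
    have e: "{{fst q, snd q} | q. q \<in> set (p # ps) \<and> cnd indep a i q} =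
      {{fst p, snd p} | q. q = p \<and> cnd indep a i p} \<union> {{fst q, snd q} | q. q \<in> set ps \<and> cnd indep a i q}"
      by (cases p) auto
    show ?thesis unfolding step_eq e by (simp add: Diff_Un Diff_eq Int_assoc)
  qed
  finally show ?case .
qed

theorem theorem2:
  fixes V :: "'a set"
    and indep :: "'a \<Rightarrow> 'a \<Rightarrow> 'a set \<Rightarrow> bool"
    and sel :: "'a list \<Rightarrow> nat \<Rightarrow> ('a \<times> 'a) list"
    and ord1 ord2 :: "'a list"
  assumes "finite V"
    and "\<And>u v S. indep u v S = indep v u S"
    and "\<And>ord i. is_ordering V ord \<Longrightarrow>
           set (sel ord i) = {(u, v). u \<in> V \<and> v \<in> V \<and> u \<noteq> v}"
    and "is_ordering V ord1"
    and "is_ordering V ord2"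
  shows "spc_skeleton V indep sel ord1 = spc_skeleton V indep sel ord2"
proof -
  have "\<And>i. set (sel ord1 i) = set (sel ord2 i)" using assms(3-5) by blast
  then have "(\<lambda>i H. spc_level indep (sel ord1 i) i H) = (\<lambda>i H. spc_level indep (sel ord2 i) i H)"
    unfolding spc_level_def fold_eq by simp
  then show ?thesis unfolding spc_skeleton_def by simp
qed

end
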